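(* Let $H\subset\mathrm{PGL}(2,\mathbb{C})=\mathrm{Aut}(\mathbb{P}^1)$ be a finite subgroup, let $G=\pi^{-1}(H)$ where $\pi\colon\mathrm{SL}(2,\mathbb{C})\to\mathrm{PGL}(2,\mathbb{C})$ is the canonical surjection, and let $\Lambda\subset\mathbb{P}^1$ be a non-empty finite $H$-invariant subset. (1) There exist homogeneous polynomials $f_1,f_2\in\mathbb{C}[x,y]$ of the same degree such that $(f_1,f_2)$ is an endomorphism of $\mathbb{A}^2$ fixed by $G$ and $\Lambda=\{[x:y]\in\mathbb{P}^1\mid f_1(x,y)y-f_2(x,y)x=0\}$. (2) For every pair $(f_1,f_2)$ as in (1), the morphism $\delta\colon\mathbb{P}^1\to\mathbb{P}^1$ defined by $[x:y]\mapsto[f_1(x,y):f_2(x,y)]$ (after cancelling the common factor of $f_1,f_2$) is $H$-equivariant. (3) There exists a pair $(f_1,f_2)$ as in (1) such that moreover $\Lambda=\{q\in\mathbb{P}^1\mid\delta(q)=q\}$. If $\Lambda$ consists of exactly one $H$-orbit, then this equality holds for every pair $(f_1,f_2)$ as in (1).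
   Context: $\mathrm{SL}(2,\mathbb{C})$ acts on $\mathrm{End}(\mathbb{A}^2)=\mathbb{C}[x,y]\times\mathbb{C}[x,y]$ by $g\cdot F=g\circ F\circ g^{-1}$, where $g$ is viewed as a linear automorphism of $\mathbb{A}^2$ and $F=(f_1,f_2)$ means $F(x,y)=(f_1(x,y),f_2(x,y))$; "$F$ fixed by $G$" means $g\cdot F=F$ for all $g\in G$. $\mathrm{PGL}(2,\mathbb{C})$ acts on $\mathbb{P}^1$ in the standard way. *)

theory Defs
  imports "HOL-Analysis.Analysis" "HOL-Computational_Algebra.Polynomial_Factorial" "HOL-Computational_Algebra.Field_as_Ring"
begin

text \<open>Polynomials in C[x,y] are represented as elements of C[x][y], i.e. the type
  complex poly poly: the outer variable is y, the inner variable is x.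
  The monomial x^i y^j has coefficient  coeff (coeff P j) i.\<close>

type_synonym bipoly = "complex poly poly"

definition ev2 :: "bipoly \<Rightarrow> complex \<Rightarrow> complex \<Rightarrow> complex" where
  "ev2 P x y = poly (map_poly (\<lambda>c. poly c x) P) y"

definition homog :: "nat \<Rightarrow> bipoly \<Rightarrow> bool" where
  "homog d P \<longleftrightarrow> (\<forall>i j. coeff (coeff P j) i \<noteq> 0 \<longrightarrow> i + j = d)"

definition endo :: "bipoly \<Rightarrow> bipoly \<Rightarrow> complex^2 \<Rightarrow> complex^2" where
  "endo f1 f2 v = vector [ev2 f1 (v$1) (v$2), ev2 f2 (v$1) (v$2)]"

definition fixed_by :: "(complex^2^2) set \<Rightarrow> (complex^2 \<Rightarrow> complex^2) \<Rightarrow> bool" where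
  "fixed_by G F \<longleftrightarrow> (\<forall>g\<in>G. \<forall>v. g *v F (matrix_inv g *v v) = F v)"

text \<open>Model of P^1: complex option, with [x:y] \<mapsto> Some (x/y) if y \<noteq> 0, and [x:0] \<mapsto> None
  (the point at infinity [1:0]).\<close>
definition proj :: "complex^2 \<Rightarrow> complex option" where
  "proj v = (if v$2 = 0 then None else Some (v$1 / v$2))"

definition rep :: "complex option \<Rightarrow> complex^2" where
  "rep q = (case q of None \<Rightarrow> vector [1, 0] | Some z \<Rightarrow> vector [z, 1])"

definition pgl_class :: "complex^2^2 \<Rightarrow> (complex^2^2) set" where
  "pgl_class A = {B. \<exists>c. c \<noteq> 0 \<and> B = (\<chi> i j. c * A$i$j)}"

definition PGL2 :: "(complex^2^2) set set" where
  "PGL2 = pgl_class ` {A. invertible A}"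

definition pgl_mul :: "(complex^2^2) set \<Rightarrow> (complex^2^2) set \<Rightarrow> (complex^2^2) set" where
  "pgl_mul X Y = pgl_class ((SOME A. A \<in> X) ** (SOME B. B \<in> Y))"

definition pgl_inv :: "(complex^2^2) set \<Rightarrow> (complex^2^2) set" where
  "pgl_inv X = pgl_class (matrix_inv (SOME A. A \<in> X))"

definition pgl_subgroup :: "(complex^2^2) set set \<Rightarrow> bool" where
  "pgl_subgroup H \<longleftrightarrow> H \<subseteq> PGL2 \<and> pgl_class (mat 1) \<in> H \<and>
     (\<forall>X\<in>H. \<forall>Y\<in>H. pgl_mul X Y \<in> H) \<and> (\<forall>X\<in>H. pgl_inv X \<in> H)"

definition pgl_act :: "(complex^2^2) set \<Rightarrow> complex option \<Rightarrow> complex option" where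
  "pgl_act X q = proj ((SOME A. A \<in> X) *v rep q)"

definition sl_preimage :: "(complex^2^2) set set \<Rightarrow> (complex^2^2) set" where
  "sl_preimage H = {A. det A = 1 \<and> pgl_class A \<in> H}"

definition zero_locus :: "bipoly \<Rightarrow> bipoly \<Rightarrow> complex option set" where
  "zero_locus f1 f2 = {proj v | v. v \<noteq> 0 \<and>
       ev2 f1 (v$1) (v$2) * v$2 - ev2 f2 (v$1) (v$2) * v$1 = 0}"

definition admissible :: "(complex^2^2) set set \<Rightarrow> complex option set \<Rightarrow> bipoly \<Rightarrow> bipoly \<Rightarrow> bool" where
  "admissible H \<Lambda> f1 f2 \<longleftrightarrow> (\<exists>d. homog d f1 \<and> homog d f2) \<and>
     fixed_by (sl_preimage H) (endo f1 f2) \<and> \<Lambda> = zero_locus f1 f2"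

definition delta :: "bipoly \<Rightarrow> bipoly \<Rightarrow> complex option \<Rightarrow> complex option" where
  "delta f1 f2 q = proj (endo (f1 div gcd f1 f2) (f2 div gcd f1 f2) (rep q))"

definition pgl_equivariant :: "(complex^2^2) set set \<Rightarrow> (complex option \<Rightarrow> complex option) \<Rightarrow> bool" where
  "pgl_equivariant H \<phi> \<longleftrightarrow> (\<forall>X\<in>H. \<forall>q. \<phi> (pgl_act X q) = pgl_act X (\<phi> q))"

end

theory Submission
  imports Defs "HOL-Computational_Algebra.Fundamental_Theorem_Algebra"
begin


lemma ev2_eval: "ev2 P x (poly c x) = poly (poly P c) x"
  unfolding ev2_def
  by (induction P) (simp_all add: map_poly_pCons)

lemma ev2_alt: "ev2 P x y = poly (poly P [:y:]) x"
  using ev2_eval[of P x "[:y:]"] by simp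

lemma ev2_add[simp]: "ev2 (A + B) x y = ev2 A x y + ev2 B x y"
  by (simp add: ev2_alt)
lemma ev2_diff[simp]: "ev2 (A - B) x y = ev2 A x y - ev2 B x y"
  by (simp add: ev2_alt)
lemma ev2_minus[simp]: "ev2 (- A) x y = - ev2 A x y"
  by (simp add: ev2_alt)
lemma ev2_mult[simp]: "ev2 (A * B) x y = ev2 A x y * ev2 B x y"
  by (simp add: ev2_alt)
lemma ev2_power[simp]: "ev2 (A ^ n) x y = ev2 A x y ^ n"
  by (simp add: ev2_alt)
lemma ev2_sum[simp]: "ev2 (\<Sum>k\<in>S. A k) x y = (\<Sum>k\<in>S. ev2 (A k) x y)"
  by (simp add: ev2_alt poly_sum)
lemma ev2_prod[simp]: "ev2 (\<Prod>k\<in>S. A k) x y = (\<Prod>k\<in>S. ev2 (A k) x y)"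
  by (simp add: ev2_alt poly_prod)
lemma ev2_const[simp]: "ev2 [:[:c:]:] x y = c"
  by (simp add: ev2_alt)
lemma ev2_0[simp]: "ev2 0 x y = 0"
  by (simp add: ev2_alt)
lemma ev2_1[simp]: "ev2 1 x y = 1"
  by (simp add: ev2_alt)

definition lin :: "complex \<Rightarrow> complex \<Rightarrow> bipoly" where
  "lin a b = [:[:0,a:], [:b:]:]"

lemma ev2_lin[simp]: "ev2 (lin a b) x y = a * x + b * y"
  by (simp add: ev2_alt lin_def algebra_simps)

lemma poly_sum_le:
  fixes p :: "'a::{comm_semiring_0,semiring_1} poly"
  assumes "degree p \<le> n"
  shows "poly p x = (\<Sum>i\<le>n. coeff p i * x ^ i)"
proof -
  have "poly p x = (\<Sum>i\<le>degree p. coeff p i * x ^ i)" by (rule poly_altdef)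
  also have "\<dots> = (\<Sum>i\<le>n. coeff p i * x ^ i)"
    by (rule sum.mono_neutral_left) (use assms in \<open>auto simp: coeff_eq_0\<close>)
  finally show ?thesis .
qed

definition dbound :: "bipoly \<Rightarrow> nat" where
  "dbound P = degree P + (\<Sum>j\<le>degree P. degree (coeff P j))"

lemma dbound_coeff: "coeff (coeff P j) i \<noteq> 0 \<Longrightarrow> i \<le> dbound P \<and> j \<le> dbound P"
proof -
  assume a: "coeff (coeff P j) i \<noteq> 0"
  hence c: "coeff P j \<noteq> 0" by auto
  hence j: "j \<le> degree P" by (meson le_degree)
  have i: "i \<le> degree (coeff P j)" using a le_degree by blast
  have "degree (coeff P j) \<le> (\<Sum>j\<le>degree P. degree (coeff P j))"
    by (rule member_le_sum) (use j in auto)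
  thus ?thesis using i j unfolding dbound_def by linarith
qed

lemma ev2_expand:
  assumes "\<And>i j. coeff (coeff P j) i \<noteq> 0 \<Longrightarrow> i \<le> N \<and> j \<le> N"
  shows "ev2 P x y = (\<Sum>j\<le>N. \<Sum>i\<le>N. coeff (coeff P j) i * x ^ i * y ^ j)"
proof -
  have dP: "degree P \<le> N"
  proof (rule ccontr)
    assume "\<not> degree P \<le> N"
    hence "P \<noteq> 0" by auto
    hence "coeff P (degree P) \<noteq> 0" by auto
    then obtain i where "coeff (coeff P (degree P)) i \<noteq> 0" by (meson leading_coeff_neq_0 poly_eqI coeff_0)
    with assms \<open>\<not> degree P \<le> N\<close> show False by blast
  qed
  have dc: "degree (coeff P j) \<le> N" for j
  proof (rule ccontr)
    assume "\<not> degree (coeff P j) \<le> N"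
    hence "coeff P j \<noteq> 0" by auto
    hence "coeff (coeff P j) (degree (coeff P j)) \<noteq> 0" by auto
    with assms \<open>\<not> degree (coeff P j) \<le> N\<close> show False by blast
  qed
  have "ev2 P x y = (\<Sum>j\<le>N. coeff (map_poly (\<lambda>c. poly c x) P) j * y ^ j)"
    unfolding ev2_def
    by (rule poly_sum_le) (meson map_poly_degree_leq dP order_trans)
  also have "\<dots> = (\<Sum>j\<le>N. (\<Sum>i\<le>N. coeff (coeff P j) i * x ^ i) * y ^ j)"
    by (rule sum.cong) (auto simp: coeff_map_poly poly_sum_le[OF dc])
  also have "\<dots> = (\<Sum>j\<le>N. \<Sum>i\<le>N. coeff (coeff P j) i * x ^ i * y ^ j)"
    by (simp add: sum_distrib_right)
  finally show ?thesis .
qed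

lemma homog_scale:
  assumes "homog d P"
  shows "ev2 P (c * x) (c * y) = c ^ d * ev2 P x y"
proof -
  let ?N = "dbound P"
  have "ev2 P (c * x) (c * y) = (\<Sum>j\<le>?N. \<Sum>i\<le>?N. coeff (coeff P j) i * (c*x) ^ i * (c*y) ^ j)"
    by (rule ev2_expand) (rule dbound_coeff)
  also have "\<dots> = (\<Sum>j\<le>?N. \<Sum>i\<le>?N. c ^ d * (coeff (coeff P j) i * x ^ i * y ^ j))"
  proof (intro sum.cong refl)
    fix j i
    show "coeff (coeff P j) i * (c*x) ^ i * (c*y) ^ j = c ^ d * (coeff (coeff P j) i * x ^ i * y ^ j)"
    proof (cases "coeff (coeff P j) i = 0")
      case False
      hence "i + j = d" using assms unfolding homog_def by blast
      thus ?thesis by (auto simp: power_mult_distrib power_add)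
    qed simp
  qed
  also have "\<dots> = c ^ d * ev2 P x y"
    by (simp add: sum_distrib_left ev2_expand[OF dbound_coeff])
  finally show ?thesis .
qed

lemma ev2_zero_imp:
  assumes "\<And>x y. ev2 P x y = 0"
  shows "P = 0"
proof -
  have "map_poly (\<lambda>c. poly c x) P = 0" for x
    using assms unfolding ev2_def by (simp add: poly_all_0_iff_0 flip: poly_all_0_iff_0)
  hence "poly (coeff P j) x = 0" for x j
    by (metis coeff_0 coeff_map_poly poly_0)
  hence "coeff P j = 0" for j using poly_all_0_iff_0 by blast
  thus ?thesis by (simp add: poly_eqI)
qed

lemma ev2_inj:
  assumes "\<And>x y. ev2 P x y = ev2 Q x y"
  shows "P = Q"
  using ev2_zero_imp[of "P - Q"] assms by simp

lemma bipoly_eqI: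
  assumes "\<And>i j. coeff (coeff P j) i = coeff (coeff Q j) i"
  shows "P = Q"
  using assms by (simp add: poly_eq_iff)


lemma homog_0[simp]: "homog d 0" by (simp add: homog_def)
lemma homog_const: "homog 0 [:[:c:]:]"
  by (auto simp: homog_def coeff_pCons split: nat.splits)
lemma homog_1: "homog 0 1"
  using homog_const[of 1] by (simp add: one_pCons)
lemma homog_lin: "homog 1 (lin a b)"
  by (auto simp: homog_def lin_def coeff_pCons split: nat.splits)
lemma homog_add: "homog d A \<Longrightarrow> homog d B \<Longrightarrow> homog d (A + B)"
  unfolding homog_def by (metis add.right_neutral add_0 coeff_add)
lemma homog_minus: "homog d A \<Longrightarrow> homog d (- A)"
  by (auto simp: homog_def)
lemma homog_diff: "homog d A \<Longrightarrow> homog d B \<Longrightarrow> homog d (A - B)"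
  using homog_add[of d A "- B"] homog_minus[of d B] by simp
lemma homog_sum: "(\<And>k. k \<in> S \<Longrightarrow> homog d (A k)) \<Longrightarrow> homog d (\<Sum>k\<in>S. A k)"
  by (induction S rule: infinite_finite_induct) (auto intro: homog_add)

lemma homog_mult:
  assumes "homog a A" "homog b B"
  shows "homog (a + b) (A * B)"
  unfolding homog_def
proof (intro allI impI)
  fix i j
  assume "coeff (coeff (A * B) j) i \<noteq> 0"
  hence "(\<Sum>l\<le>j. \<Sum>m\<le>i. coeff (coeff A l) m * coeff (coeff B (j - l)) (i - m)) \<noteq> 0"
    by (simp add: coeff_mult coeff_sum)
  then obtain l where l: "l \<le> j" and "(\<Sum>m\<le>i. coeff (coeff A l) m * coeff (coeff B (j - l)) (i - m)) \<noteq> 0"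
    by (meson atMost_iff sum.neutral)
  then obtain m where m: "m \<le> i" and "coeff (coeff A l) m * coeff (coeff B (j - l)) (i - m) \<noteq> 0"
    by (meson atMost_iff sum.neutral)
  hence "coeff (coeff A l) m \<noteq> 0" "coeff (coeff B (j - l)) (i - m) \<noteq> 0" by auto
  hence "m + l = a" "(i - m) + (j - l) = b" using assms unfolding homog_def by blast+
  thus "i + j = a + b" using l m by linarith
qed

lemma homog_prod:
  "finite S \<Longrightarrow> (\<And>k. k \<in> S \<Longrightarrow> homog (e k) (A k)) \<Longrightarrow> homog (\<Sum>k\<in>S. e k) (\<Prod>k\<in>S. A k)"
proof (induction S rule: finite_induct)
  case empty thus ?case by (simp add: homog_1)
next
  case (insert x F) thus ?case by (simp add: homog_mult)
qed

lemma homog_power: "homog d A \<Longrightarrow> homog (n * d) (A ^ n)"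
  by (induction n) (auto simp: homog_1 dest: homog_mult)

lemma homog_unique: "P \<noteq> 0 \<Longrightarrow> homog d P \<Longrightarrow> homog e P \<Longrightarrow> d = e"
proof -
  assume "P \<noteq> 0" "homog d P" "homog e P"
  then obtain j where "coeff P j \<noteq> 0" using poly_eq_iff[of P 0] by auto
  then obtain i where "coeff (coeff P j) i \<noteq> 0" using poly_eq_iff[of "coeff P j" 0] by auto
  thus "d = e" using \<open>homog d P\<close> \<open>homog e P\<close> unfolding homog_def by metis
qed

definition hcomp :: "nat \<Rightarrow> bipoly \<Rightarrow> bipoly" where
  "hcomp k P = (\<Sum>j\<le>k. monom (monom (coeff (coeff P j) (k - j)) (k - j)) j)"

lemma coeff_comp: "coeff (coeff (hcomp k P) j) i = (if i + j = k then coeff (coeff P j) i else 0)"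
proof -
  have "coeff (coeff (hcomp k P) j) i =
     (\<Sum>j'\<le>k. if j' = j then coeff (monom (coeff (coeff P j') (k - j')) (k - j')) i else 0)"
    unfolding hcomp_def by (simp add: coeff_sum coeff_monom)
  also have "\<dots> = (if j \<le> k then coeff (monom (coeff (coeff P j) (k - j)) (k - j)) i else 0)"
    by (simp add: sum.delta')
  also have "\<dots> = (if i + j = k then coeff (coeff P j) i else 0)"
    by (auto simp: coeff_monom)
  finally show ?thesis .
qed

lemma homog_comp: "homog k (hcomp k P)"
  by (auto simp: homog_def coeff_comp)

lemma comp_add: "hcomp k (A + B) = hcomp k A + hcomp k B"
  by (rule bipoly_eqI) (simp add: coeff_comp)

lemma comp_0[simp]: "hcomp k 0 = 0"
  by (rule bipoly_eqI) (simp add: coeff_comp)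

lemma comp_sum: "hcomp k (\<Sum>l\<in>S. A l) = (\<Sum>l\<in>S. hcomp k (A l))"
  by (induction S rule: infinite_finite_induct) (auto simp: comp_add)

lemma comp_homog: "homog m Q \<Longrightarrow> hcomp k Q = (if k = m then Q else 0)"
  by (rule bipoly_eqI) (auto simp: coeff_comp homog_def)

lemma sum_comp: "P = (\<Sum>k\<le>dbound P + dbound P. hcomp k P)"
proof (rule bipoly_eqI)
  fix i j
  have "coeff (coeff (\<Sum>k\<le>dbound P + dbound P. hcomp k P) j) i =
      (\<Sum>k\<le>dbound P + dbound P. if k = i + j then coeff (coeff P j) i else 0)"
    by (simp add: coeff_sum coeff_comp eq_commute)
  also have "\<dots> = (if i + j \<le> dbound P + dbound P then coeff (coeff P j) i else 0)"
    by (simp add: sum.delta)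
  also have "\<dots> = coeff (coeff P j) i"
    using dbound_coeff[of P j i] by (metis add_le_mono)
  finally show "coeff (coeff P j) i = coeff (coeff (\<Sum>k\<le>dbound P + dbound P. hcomp k P) j) i" by simp
qed

lemma homog_iff_comp: "homog d P \<longleftrightarrow> (\<forall>k. k \<noteq> d \<longrightarrow> hcomp k P = 0)"
proof
  assume "homog d P" thus "\<forall>k. k \<noteq> d \<longrightarrow> hcomp k P = 0" by (simp add: comp_homog)
next
  assume a: "\<forall>k. k \<noteq> d \<longrightarrow> hcomp k P = 0"
  show "homog d P" unfolding homog_def
  proof (intro allI impI, rule ccontr)
    fix i j assume "coeff (coeff P j) i \<noteq> 0" "i + j \<noteq> d"
    hence "coeff (coeff (hcomp (i+j) P) j) i \<noteq> 0" by (simp add: coeff_comp)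
    with a \<open>i + j \<noteq> d\<close> show False by auto
  qed
qed


lemma comp_big: "k > dbound P + dbound P \<Longrightarrow> hcomp k P = 0"
proof (rule bipoly_eqI)
  fix i j assume "k > dbound P + dbound P"
  thus "coeff (coeff (hcomp k P) j) i = coeff (coeff 0 j) i"
    using dbound_coeff[of P j i] by (simp add: coeff_comp) (metis add_le_mono not_le)
qed

definition KS :: "bipoly \<Rightarrow> nat set" where "KS P = {k. hcomp k P \<noteq> 0}"

lemma KS_le: "hcomp k P \<noteq> 0 \<Longrightarrow> k \<le> dbound P + dbound P"
  using comp_big not_le by blast

lemma KS_finite: "finite (KS P)"
proof -
  have "KS P \<subseteq> {..dbound P + dbound P}"
    using KS_le unfolding KS_def by auto
  thus ?thesis using finite_subset by blast
qed

lemma sum_KS: "P = (\<Sum>k\<in>KS P. hcomp k P)"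
proof -
  have "P = (\<Sum>k\<le>dbound P + dbound P. hcomp k P)" by (rule sum_comp)
  also have "\<dots> = (\<Sum>k\<in>KS P. hcomp k P)"
    by (rule sum.mono_neutral_right) (auto simp: KS_def KS_le)
  finally show ?thesis .
qed

lemma KS_nonempty: "P \<noteq> 0 \<Longrightarrow> KS P \<noteq> {}"
  using sum_KS[of P] by auto

lemma dsum_top:
  fixes K L :: "nat set"
  assumes "finite K" "finite L" "k0 \<in> K" "l0 \<in> L" "\<forall>k\<in>K. k \<le> k0" "\<forall>l\<in>L. l \<le> l0"
  shows "(\<Sum>k\<in>K. \<Sum>l\<in>L. if k0 + l0 = k + l then f k l else (0::'a::comm_monoid_add)) = f k0 l0"
proof -
  have "(\<Sum>k\<in>K. \<Sum>l\<in>L. if k0 + l0 = k + l then f k l else 0) =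
        (\<Sum>k\<in>K. \<Sum>l\<in>L. if k = k0 then (if l = l0 then f k l else 0) else 0)"
  proof (intro sum.cong refl)
    fix k l assume "k \<in> K" "l \<in> L"
    hence "k \<le> k0" "l \<le> l0" using assms by auto
    hence "(k0 + l0 = k + l) = (k = k0 \<and> l = l0)" by arith
    thus "(if k0 + l0 = k + l then f k l else 0) = (if k = k0 then (if l = l0 then f k l else 0) else 0)" by auto
  qed
  also have "\<dots> = (\<Sum>k\<in>K. if k = k0 then f k0 l0 else 0)"
    by (intro sum.cong refl) (use assms in \<open>auto simp: sum.delta\<close>)
  also have "\<dots> = f k0 l0" using assms by (simp add: sum.delta)
  finally show ?thesis .
qed

lemma dsum_bot:
  fixes K L :: "nat set"
  assumes "finite K" "finite L" "k0 \<in> K" "l0 \<in> L" "\<forall>k\<in>K. k0 \<le> k" "\<forall>l\<in>L. l0 \<le> l"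
  shows "(\<Sum>k\<in>K. \<Sum>l\<in>L. if k0 + l0 = k + l then f k l else (0::'a::comm_monoid_add)) = f k0 l0"
proof -
  have "(\<Sum>k\<in>K. \<Sum>l\<in>L. if k0 + l0 = k + l then f k l else 0) =
        (\<Sum>k\<in>K. \<Sum>l\<in>L. if k = k0 then (if l = l0 then f k l else 0) else 0)"
  proof (intro sum.cong refl)
    fix k l assume "k \<in> K" "l \<in> L"
    hence "k0 \<le> k" "l0 \<le> l" using assms by auto
    hence "(k0 + l0 = k + l) = (k = k0 \<and> l = l0)" by arith
    thus "(if k0 + l0 = k + l then f k l else 0) = (if k = k0 then (if l = l0 then f k l else 0) else 0)" by auto
  qed
  also have "\<dots> = (\<Sum>k\<in>K. if k = k0 then f k0 l0 else 0)"
    by (intro sum.cong refl) (use assms in \<open>auto simp: sum.delta\<close>)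
  also have "\<dots> = f k0 l0" using assms by (simp add: sum.delta)
  finally show ?thesis .
qed

lemma comp_prod_expand:
  "hcomp n (A * B) = (\<Sum>k\<in>KS A. \<Sum>l\<in>KS B. if n = k + l then hcomp k A * hcomp l B else 0)"
proof -
  have "A * B = (\<Sum>k\<in>KS A. hcomp k A) * (\<Sum>l\<in>KS B. hcomp l B)"
    using sum_KS[of A] sum_KS[of B] by simp
  also have "\<dots> = (\<Sum>k\<in>KS A. \<Sum>l\<in>KS B. hcomp k A * hcomp l B)"
    by (simp add: sum_product)
  finally have "hcomp n (A * B) = (\<Sum>k\<in>KS A. \<Sum>l\<in>KS B. hcomp n (hcomp k A * hcomp l B))"
    by (simp add: comp_sum)
  also have "\<dots> = (\<Sum>k\<in>KS A. \<Sum>l\<in>KS B. if n = k + l then hcomp k A * hcomp l B else 0)"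
    by (intro sum.cong refl) (simp add: comp_homog[OF homog_mult[OF homog_comp homog_comp]])
  finally show ?thesis .
qed

lemma homog_factor:
  assumes "A * B = P" "P \<noteq> 0" "homog d P"
  shows "\<exists>a b. homog a A \<and> homog b B \<and> a + b = d"
proof -
  have A0: "A \<noteq> 0" and B0: "B \<noteq> 0" using assms by auto
  define ah where "ah = Max (KS A)"
  define al where "al = Min (KS A)"
  define bh where "bh = Max (KS B)"
  define bl where "bl = Min (KS B)"
  have fin: "finite (KS A)" "finite (KS B)" by (rule KS_finite)+
  have ne: "KS A \<noteq> {}" "KS B \<noteq> {}" using KS_nonempty A0 B0 by auto
  have mem: "ah \<in> KS A" "al \<in> KS A" "bh \<in> KS B" "bl \<in> KS B"
    using fin ne by (auto simp: ah_def al_def bh_def bl_def)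
  have bnd: "\<forall>k\<in>KS A. k \<le> ah" "\<forall>k\<in>KS A. al \<le> k" "\<forall>k\<in>KS B. k \<le> bh" "\<forall>k\<in>KS B. bl \<le> k"
    using fin ne by (auto simp: ah_def al_def bh_def bl_def)
  have nz: "hcomp k A * hcomp l B \<noteq> 0" if "k \<in> KS A" "l \<in> KS B" for k l
    using that by (simp add: KS_def)
  have "hcomp (ah + bh) P = hcomp ah A * hcomp bh B"
    unfolding assms(1)[symmetric] comp_prod_expand
    by (rule dsum_top) (use fin mem bnd in auto)
  hence "hcomp (ah + bh) P \<noteq> 0" using nz mem by auto
  hence h: "ah + bh = d" using assms(3) homog_iff_comp by blast
  have "hcomp (al + bl) P = hcomp al A * hcomp bl B"
    unfolding assms(1)[symmetric] comp_prod_expand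
    by (rule dsum_bot) (use fin mem bnd in auto)
  hence "hcomp (al + bl) P \<noteq> 0" using nz mem by auto
  hence l: "al + bl = d" using assms(3) homog_iff_comp by blast
  have "al \<le> ah" "bl \<le> bh" using bnd mem by auto
  hence eq: "al = ah" "bl = bh" using h l by linarith+
  have "KS A = {ah}" using bnd mem eq by force
  hence "A = hcomp ah A" using sum_KS[of A] by simp
  hence hA: "homog ah A" by (metis homog_comp)
  have "KS B = {bh}" using bnd mem eq by force
  hence "B = hcomp bh B" using sum_KS[of B] by simp
  hence hB: "homog bh B" by (metis homog_comp)
  show ?thesis using hA hB h by blast
qed


definition linf :: "complex \<Rightarrow> complex \<Rightarrow> bipoly" where
  "linf a b = (if a = 0 then [:[:0,1:]:] else [:[:0, -(b/a):], 1:])"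

lemma linf_not_unit: "\<not> is_unit (linf a b)"
proof
  assume u: "is_unit (linf a b)"
  show False
  proof (cases "a = 0")
    case True
    hence "is_unit [:0,1::complex:]" using u by (simp add: linf_def is_unit_const_poly_iff)
    thus False by (simp add: is_unit_iff_degree)
  next
    case False
    then obtain c where "linf a b = [:c:]" using u is_unit_poly_iff by blast
    thus False using False by (simp add: linf_def)
  qed
qed

lemma ev2_linf: "ev2 (linf a b) x y = (if a = 0 then x else y - (b / a) * x)"
  by (simp add: linf_def ev2_alt algebra_simps)

lemma lin_factor:
  assumes "homog d P" "ev2 P a b = 0" "a \<noteq> 0 \<or> b \<noteq> 0"
  shows "linf a b dvd P"
proof (cases "a = 0")
  case False
  define c where "c = [:0, b / a:]"
  have "ev2 P a b = a ^ d * ev2 P 1 (b / a)"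
    using homog_scale[OF assms(1), of a 1 "b/a"] False by simp
  hence z: "ev2 P 1 (b / a) = 0" using assms(2) False by simp
  have "poly (poly P c) x = 0" for x
  proof -
    have "poly (poly P c) x = ev2 P x (poly c x)" by (simp add: ev2_eval)
    also have "\<dots> = ev2 P (x * 1) (x * (b / a))" by (simp add: c_def mult.commute)
    also have "\<dots> = x ^ d * ev2 P 1 (b / a)" by (rule homog_scale[OF assms(1)])
    finally show ?thesis using z by simp
  qed
  hence pc: "poly P c = 0" using poly_all_0_iff_0 by blast
  have "[:-c, 1:] * synthetic_div P c + [:poly P c:] = P" by (rule synthetic_div_correct')
  hence "P = [:-c, 1:] * synthetic_div P c" using pc by simp
  moreover have "[:-c, 1:] = linf a b" using False by (simp add: linf_def c_def)
  ultimately show ?thesis by (metis dvd_triv_left)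
next
  case True
  hence b: "b \<noteq> 0" using assms(3) by simp
  have co: "coeff (coeff P j) 0 = 0" if "j \<noteq> d" for j
    using assms(1) that unfolding homog_def by fastforce
  have "map_poly (\<lambda>c. poly c 0) P = monom (coeff (coeff P d) 0) d"
    by (rule poly_eqI) (auto simp: coeff_map_poly poly_0_coeff_0 coeff_monom co)
  hence "ev2 P 0 b = coeff (coeff P d) 0 * b ^ d" unfolding ev2_def by (simp add: poly_monom)
  hence "coeff (coeff P d) 0 = 0" using assms(2) True b by simp
  hence co': "coeff (coeff P j) 0 = 0" for j using co by (cases "j = d") auto
  have "[:0, 1:] dvd coeff P j" for j
    using dvd_iff_poly_eq_0[of 0 "coeff P j"] co' by (simp add: poly_0_coeff_0)
  hence "[:[:0,1:]:] dvd P" by (simp add: const_poly_dvd_iff)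
  thus ?thesis using True by (simp add: linf_def)
qed


lemma homog_quot:
  assumes "homog d f" "homog e h" "h \<noteq> 0" "h dvd f"
  shows "homog (d - e) (f div h)"
proof (cases "f = 0")
  case True thus ?thesis by simp
next
  case False
  have "h * (f div h) = f" using assms(4) by simp
  then obtain a b where "homog a h" "homog b (f div h)" "a + b = d"
    using homog_factor[OF _ False assms(1)] by blast
  moreover have "a = e" using homog_unique[OF assms(3)] \<open>homog a h\<close> assms(2) by blast
  ultimately show ?thesis by (metis add_diff_cancel_left')
qed

locale pair =
  fixes f1 f2 :: bipoly and d :: nat
  assumes h1: "homog d f1" and h2: "homog d f2" and nz: "f1 \<noteq> 0 \<or> f2 \<noteq> 0"
begin

definition "h = gcd f1 f2"
definition "g1 = f1 div h"
definition "g2 = f2 div h"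

lemma h_nz: "h \<noteq> 0" using nz by (simp add: h_def)

lemma f1_eq: "f1 = h * g1" by (simp add: h_def g1_def)
lemma f2_eq: "f2 = h * g2" by (simp add: h_def g2_def)

lemma ev_f1: "ev2 f1 x y = ev2 h x y * ev2 g1 x y" by (subst f1_eq) simp
lemma ev_f2: "ev2 f2 x y = ev2 h x y * ev2 g2 x y" by (subst f2_eq) simp

lemma h_homog: "\<exists>e. homog e h"
proof -
  obtain f where f: "f = f1 \<or> f = f2" "f \<noteq> 0" using nz by blast
  hence hf: "homog d f" using h1 h2 by blast
  have "h * (f div h) = f" using f by (auto simp: h_def)
  thus ?thesis using homog_factor[OF _ f(2) hf] by blast
qed

lemma g_homog: "\<exists>k. homog k g1 \<and> homog k g2"
proof -
  obtain e where e: "homog e h" using h_homog by blast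
  have "homog (d - e) g1" unfolding g1_def by (rule homog_quot[OF h1 e h_nz]) (simp add: h_def)
  moreover have "homog (d - e) g2" unfolding g2_def by (rule homog_quot[OF h2 e h_nz]) (simp add: h_def)
  ultimately show ?thesis by blast
qed

lemma g_nz: "g1 \<noteq> 0 \<or> g2 \<noteq> 0" using nz f1_eq f2_eq by auto

lemma no_common_zero:
  assumes "a \<noteq> 0 \<or> b \<noteq> 0"
  shows "ev2 g1 a b \<noteq> 0 \<or> ev2 g2 a b \<noteq> 0"
proof (rule ccontr)
  assume "\<not> ?thesis"
  hence z: "ev2 g1 a b = 0" "ev2 g2 a b = 0" by auto
  obtain k where k: "homog k g1" "homog k g2" using g_homog by blast
  have "linf a b dvd g1" by (rule lin_factor[OF k(1) z(1) assms])
  hence "h * linf a b dvd f1" by (subst f1_eq) simp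
  moreover have "linf a b dvd g2" by (rule lin_factor[OF k(2) z(2) assms])
  hence "h * linf a b dvd f2" by (subst f2_eq) simp
  ultimately have "h * linf a b dvd h * 1" unfolding h_def by simp
  hence "linf a b dvd 1" using h_nz by (metis dvd_mult_cancel_left mult.right_neutral)
  thus False using linf_not_unit by blast
qed

end


type_synonym vec2 = "complex^2"
type_synonym mat2 = "complex^2^2"

definition Ev :: "bipoly \<Rightarrow> vec2 \<Rightarrow> complex" where "Ev P v = ev2 P (v$1) (v$2)"

definition det2 :: "vec2 \<Rightarrow> vec2 \<Rightarrow> complex" where "det2 u w = u$1 * w$2 - u$2 * w$1"

lemma vec2_eq_iff: "(v::vec2) = w \<longleftrightarrow> v$1 = w$1 \<and> v$2 = w$2"
  by (simp add: vec_eq_iff forall_2)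

lemma vec2_nz: "(v::vec2) \<noteq> 0 \<longleftrightarrow> v$1 \<noteq> 0 \<or> v$2 \<noteq> 0"
  by (simp add: vec2_eq_iff)

lemma mv1: "((A::mat2) *v v)$1 = A$1$1 * v$1 + A$1$2 * v$2"
  by (simp add: matrix_vector_mult_def sum_2)
lemma mv2: "((A::mat2) *v v)$2 = A$2$1 * v$1 + A$2$2 * v$2"
  by (simp add: matrix_vector_mult_def sum_2)

lemma rep_None1[simp]: "rep None $ 1 = 1" and rep_None2[simp]: "rep None $ 2 = 0"
  and rep_Some1[simp]: "rep (Some z) $ 1 = z" and rep_Some2[simp]: "rep (Some z) $ 2 = 1"
  by (simp_all add: rep_def)

lemma rep_nz: "rep q \<noteq> 0"
  by (cases q) (simp_all add: vec2_nz)

lemma proj_rep[simp]: "proj (rep q) = q"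
  by (cases q) (simp_all add: proj_def)

lemma proj_eq_iff:
  assumes "u \<noteq> 0" "v \<noteq> 0"
  shows "proj u = proj v \<longleftrightarrow> det2 u v = 0"
  using assms unfolding vec2_nz proj_def det2_def
  by (auto simp: field_simps split: if_splits)

lemma proj_scale: "c \<noteq> 0 \<Longrightarrow> proj (c *s v) = proj v"
  by (simp add: proj_def)

lemma rep_proj: "v \<noteq> 0 \<Longrightarrow> \<exists>s. s \<noteq> 0 \<and> rep (proj v) = s *s v"
proof -
  assume "v \<noteq> 0"
  show ?thesis
  proof (cases "v$2 = 0")
    case True
    hence "v$1 \<noteq> 0" using \<open>v \<noteq> 0\<close> vec2_nz by blast
    thus ?thesis using True by (intro exI[of _ "1 / v$1"]) (simp add: proj_def rep_def vec2_eq_iff)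
  next
    case False
    thus ?thesis by (intro exI[of _ "1 / v$2"]) (simp add: proj_def rep_def vec2_eq_iff)
  qed
qed

lemma vec_rep: "v \<noteq> 0 \<Longrightarrow> \<exists>s. s \<noteq> 0 \<and> v = s *s rep (proj v)"
proof -
  assume "v \<noteq> 0"
  then obtain s where "s \<noteq> 0" "rep (proj v) = s *s v" using rep_proj by blast
  thus ?thesis by (intro exI[of _ "1/s"]) (simp add: vec2_eq_iff)
qed

lemma smult_nz: "c \<noteq> 0 \<Longrightarrow> (v::vec2) \<noteq> 0 \<Longrightarrow> c *s v \<noteq> 0"
  by (simp add: vec2_nz)

lemma Ev_scale: "homog d P \<Longrightarrow> Ev P (c *s v) = c ^ d * Ev P v"
  by (simp add: Ev_def homog_scale)

lemma endo1[simp]: "endo f1 f2 v $ 1 = Ev f1 v" and endo2[simp]: "endo f1 f2 v $ 2 = Ev f2 v"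
  by (simp_all add: endo_def Ev_def)

lemma det2_mult: "det2 ((A::mat2) *v u) (A *v w) = det A * det2 u w"
  by (simp add: det2_def mv1 mv2 det_2 algebra_simps)

lemma det2_smult_right: "det2 u (c *s w) = c * det2 u w"
  by (simp add: det2_def algebra_simps)
lemma det2_smult_left: "det2 (c *s u) w = c * det2 u w"
  by (simp add: det2_def algebra_simps)
lemma det2_self: "det2 u u = 0"
  by (simp add: det2_def algebra_simps)

lemma mv_nz: "invertible (A::mat2) \<Longrightarrow> v \<noteq> 0 \<Longrightarrow> A *v v \<noteq> 0"
  by (metis inj_matrix_vector_mult injD matrix_vector_mult_0_right)

lemma inv_mv:
  assumes "invertible (A::mat2)"
  shows "A *v (matrix_inv A *v v) = v" "matrix_inv A *v (A *v v) = v"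
proof -
  have "A ** matrix_inv A = mat 1 \<and> matrix_inv A ** A = mat 1"
    using assms unfolding invertible_def matrix_inv_def by (rule someI_ex)
  thus "A *v (matrix_inv A *v v) = v" "matrix_inv A *v (A *v v) = v"
    by (simp_all add: matrix_vector_mul_assoc)
qed

definition smat :: "complex \<Rightarrow> mat2 \<Rightarrow> mat2" where "smat c A = (\<chi> i j. c * A$i$j)"

lemma smat_mv: "smat c A *v v = c *s (A *v v)"
  by (simp add: vec2_eq_iff mv1 mv2 smat_def algebra_simps)

lemma smat_1[simp]: "smat 1 A = A"
  by (simp add: smat_def vec_eq_iff)

lemma smat_smat: "smat c (smat d A) = smat (c * d) A"
  by (simp add: smat_def vec_eq_iff)

lemma det_smat: "det (smat c A) = c ^ 2 * det A"
  by (simp add: det_2 smat_def power2_eq_square algebra_simps)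

lemma smat_mm: "smat c A ** smat d B = smat (c * d) (A ** B)"
  by (simp add: smat_def vec_eq_iff matrix_matrix_mult_def sum_distrib_left algebra_simps)

lemma pgl_class_alt: "pgl_class A = {B. \<exists>c. c \<noteq> 0 \<and> B = smat c A}"
  by (simp add: pgl_class_def smat_def)

lemma in_pgl_class: "A \<in> pgl_class A"
  unfolding pgl_class_alt by (intro CollectI exI[of _ 1]) simp

lemma pgl_class_smat: "c \<noteq> 0 \<Longrightarrow> pgl_class (smat c A) = pgl_class A"
  unfolding pgl_class_alt
proof (auto simp: smat_smat)
  fix ca :: complex assume "c \<noteq> 0" "ca \<noteq> 0"
  thus "\<exists>cb. cb \<noteq> 0 \<and> smat ca A = smat (cb * c) A" by (intro exI[of _ "ca / c"]) simp
next
  fix ca :: complex assume "c \<noteq> 0" "ca \<noteq> 0"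
  thus "\<exists>cb. cb \<noteq> 0 \<and> smat (ca * c) A = smat cb A" by (intro exI[of _ "ca * c"]) simp
qed

lemma pgl_class_mem: "B \<in> pgl_class A \<Longrightarrow> \<exists>c. c \<noteq> 0 \<and> B = smat c A"
  unfolding pgl_class_alt by blast

definition rp :: "(complex^2^2) set \<Rightarrow> mat2" where "rp X = (SOME A. A \<in> X)"

lemma rp_class: "\<exists>c. c \<noteq> 0 \<and> rp (pgl_class A) = smat c A"
  using someI[of "\<lambda>B. B \<in> pgl_class A", OF in_pgl_class] pgl_class_mem unfolding rp_def by blast

lemma act_class: "pgl_act (pgl_class A) q = proj (A *v rep q)"
proof -
  obtain c where "c \<noteq> 0" "rp (pgl_class A) = smat c A" using rp_class by blast
  thus "pgl_act (pgl_class A) q = proj (A *v rep q)"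
    unfolding pgl_act_def rp_def[symmetric] by (simp add: smat_mv proj_scale)
qed

lemma PGL2_elem: "X \<in> PGL2 \<Longrightarrow> \<exists>g. det g = 1 \<and> pgl_class g = X"
proof -
  assume "X \<in> PGL2"
  then obtain M where M: "invertible M" "X = pgl_class M" unfolding PGL2_def by blast
  hence dM: "det M \<noteq> 0" by (simp add: invertible_det_nz)
  define s where "s = csqrt (det M)"
  have s: "s \<noteq> 0" "s ^ 2 = det M" using dM by (auto simp: s_def)
  have "det (smat (1/s) M) = 1" using s dM by (simp add: det_smat power_divide)
  moreover have "pgl_class (smat (1/s) M) = X" using s M by (simp add: pgl_class_smat)
  ultimately show ?thesis by blast
qed

lemma det1_inv: "det (g::mat2) = 1 \<Longrightarrow> invertible g"
  by (simp add: invertible_det_nz)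


definition lsub :: "mat2 \<Rightarrow> bipoly \<Rightarrow> bipoly" where
  "lsub g P = (\<Sum>j\<le>dbound P. \<Sum>i\<le>dbound P. [:[:coeff (coeff P j) i:]:] *
      lin (g$1$1) (g$1$2) ^ i * lin (g$2$1) (g$2$2) ^ j)"

lemma ev2_smult[simp]: "ev2 (smult a P) x y = poly a x * ev2 P x y"
  by (simp add: ev2_alt)

lemma Ev_smult[simp]: "Ev (smult a P) v = poly a (v$1) * Ev P v"
  by (simp add: Ev_def)

lemma Ev_lsub: "Ev (lsub g P) v = Ev P (g *v v)"
  unfolding Ev_def lsub_def mv1 mv2
  by (simp add: ev2_expand[OF dbound_coeff, of P] mult.assoc)

lemma Ev_vector: "Ev P (vector [x, y]) = ev2 P x y"
  by (simp add: Ev_def)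

lemma Ev_zero_imp: "(\<And>v. Ev P v = 0) \<Longrightarrow> P = 0"
  by (rule ev2_zero_imp) (metis Ev_vector)

lemma lsub_nz:
  assumes "invertible g" "P \<noteq> 0"
  shows "lsub g P \<noteq> 0"
proof
  assume "lsub g P = 0"
  hence "Ev P (g *v v) = 0" for v by (metis Ev_lsub Ev_def ev2_0)
  hence "Ev P u = 0" for u by (metis inv_mv(1)[OF assms(1)])
  hence "P = 0" by (rule Ev_zero_imp)
  thus False using assms by simp
qed

lemma Ev_mult[simp]: "Ev (A * B) v = Ev A v * Ev B v" by (simp add: Ev_def)
lemma Ev_add[simp]: "Ev (A + B) v = Ev A v + Ev B v" by (simp add: Ev_def)
lemma Ev_diff[simp]: "Ev (A - B) v = Ev A v - Ev B v" by (simp add: Ev_def)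
lemma Ev_const[simp]: "Ev [:[:c:]:] v = c" by (simp add: Ev_def)
lemma Ev_power[simp]: "Ev (A ^ n) v = Ev A v ^ n" by (simp add: Ev_def)
lemma Ev_sum[simp]: "Ev (\<Sum>k\<in>S. A k) v = (\<Sum>k\<in>S. Ev (A k) v)" by (simp add: Ev_def)
lemma Ev_prod[simp]: "Ev (\<Prod>k\<in>S. A k) v = (\<Prod>k\<in>S. Ev (A k) v)" by (simp add: Ev_def)

lemma homog_has_zero:
  assumes "homog n Q" "n \<ge> 1"
  shows "\<exists>q. Ev Q (rep q) = 0"
proof (cases "\<exists>z. ev2 Q z 1 = 0")
  case True
  then obtain z where "ev2 Q z 1 = 0" by blast
  thus ?thesis by (intro exI[of _ "Some z"]) (simp add: Ev_def)
next
  case False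
  define p where "p = poly Q [:1:]"
  have pe: "poly p z = ev2 Q z 1" for z by (simp add: p_def ev2_alt)
  have "constant (poly p)"
    using fundamental_theorem_of_algebra[of p] False pe by auto
  hence pc: "ev2 Q z 1 = ev2 Q 0 1" for z using pe unfolding constant_def by metis
  define c where "c = ev2 Q 0 1"
  define r where "r = map_poly (\<lambda>a. poly a 1) Q - monom c n"
  have "poly r y = 0" if "y \<noteq> 0" for y
  proof -
    have "ev2 Q 1 y = ev2 Q (y * (1/y)) (y * 1)" using that by simp
    also have "\<dots> = y ^ n * ev2 Q (1/y) 1" by (rule homog_scale[OF assms(1)])
    also have "\<dots> = y ^ n * c" using pc c_def by simp
    finally show ?thesis by (simp add: r_def ev2_def poly_monom)
  qed
  hence "{y. y \<noteq> 0} \<subseteq> {y. poly r y = 0}" by auto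
  moreover have "infinite {y::complex. y \<noteq> 0}"
  proof -
    have "{y::complex. y \<noteq> 0} = UNIV - {0}" by auto
    thus ?thesis by (simp add: infinite_UNIV_char_0)
  qed
  ultimately have "infinite {y. poly r y = 0}" using finite_subset by blast
  hence "r = 0" using poly_roots_finite by blast
  hence "ev2 Q 1 0 = c * 0 ^ n"
    using arg_cong[OF \<open>r = 0\<close>, of "\<lambda>r. poly r 0"] by (simp add: r_def ev2_def poly_monom)
  hence "ev2 Q 1 0 = 0" using assms(2) by simp
  thus ?thesis by (intro exI[of _ None]) (simp add: Ev_def)
qed

context pair
begin

lemma Gm_nz: "w \<noteq> 0 \<Longrightarrow> endo g1 g2 w \<noteq> 0"
  using no_common_zero[of "w$1" "w$2"] by (simp add: vec2_nz Ev_def)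

lemma Gm_scale: "\<exists>k. \<forall>c w. endo g1 g2 (c *s w) = c ^ k *s endo g1 g2 w"
proof -
  obtain k where "homog k g1" "homog k g2" using g_homog by blast
  thus ?thesis by (intro exI[of _ k]) (simp add: vec2_eq_iff Ev_scale)
qed

lemma delta_eq: "delta f1 f2 q = proj (endo g1 g2 (rep q))"
  by (simp add: delta_def g1_def g2_def h_def)

lemma delta_proj: "v \<noteq> 0 \<Longrightarrow> delta f1 f2 (proj v) = proj (endo g1 g2 v)"
proof -
  assume "v \<noteq> 0"
  then obtain s where s: "s \<noteq> 0" "rep (proj v) = s *s v" using rep_proj by blast
  obtain k where k: "\<forall>c w. endo g1 g2 (c *s w) = c ^ k *s endo g1 g2 w" using Gm_scale by blast
  show ?thesis unfolding delta_eq s(2) using s(1) by (simp add: proj_scale k)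
qed

lemma equiv_vec:
  assumes g: "invertible g" and fx: "\<And>w. endo f1 f2 (g *v w) = g *v endo f1 f2 w"
    and w: "w \<noteq> 0"
  shows "proj (endo g1 g2 (g *v w)) = proj (g *v endo g1 g2 w)"
proof -
  define C where "C i j = ([:[:g$i$j:]:] :: bipoly)" for i j
  define Phi where "Phi = lsub g g1 * (C 2 1 * g1 + C 2 2 * g2) - lsub g g2 * (C 1 1 * g1 + C 1 2 * g2)"
  have ePhi: "Ev Phi u = det2 (endo g1 g2 (g *v u)) (g *v endo g1 g2 u)" for u
    by (simp add: Phi_def C_def Ev_lsub det2_def mv1 mv2)
  have "Ev (lsub g h) u * Ev Phi u = 0" for u
  proof -
    have e1: "Ev f1 (g *v u) = g$1$1 * Ev f1 u + g$1$2 * Ev f2 u"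
      using arg_cong[OF fx[of u], of "\<lambda>v. v$1"] by (simp add: mv1)
    have e2: "Ev f2 (g *v u) = g$2$1 * Ev f1 u + g$2$2 * Ev f2 u"
      using arg_cong[OF fx[of u], of "\<lambda>v. v$2"] by (simp add: mv2)
    have f1e: "Ev f1 v = Ev h v * Ev g1 v" for v by (simp add: Ev_def ev_f1)
    have f2e: "Ev f2 v = Ev h v * Ev g2 v" for v by (simp add: Ev_def ev_f2)
    define a1 where "a1 = Ev g1 (g *v u)"
    define a2 where "a2 = Ev g2 (g *v u)"
    define b1 where "b1 = (g *v endo g1 g2 u)$1"
    define b2 where "b2 = (g *v endo g1 g2 u)$2"
    define hg where "hg = Ev h (g *v u)"
    define hu where "hu = Ev h u"
    have ea: "hg * a1 = hu * b1" using e1 unfolding f1e f2e a1_def hg_def hu_def b1_def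
      by (simp add: mv1 algebra_simps)
    have eb: "hg * a2 = hu * b2" using e2 unfolding f1e f2e a2_def hg_def hu_def b2_def
      by (simp add: mv2 algebra_simps)
    have "hg * (a1 * b2 - a2 * b1) = (hg * a1) * b2 - (hg * a2) * b1" by (simp add: algebra_simps)
    also have "\<dots> = 0" unfolding ea eb by simp
    finally show ?thesis unfolding ePhi Ev_lsub det2_def
      by (simp add: a1_def a2_def b1_def b2_def hg_def)
  qed
  hence "lsub g h * Phi = 0" by (intro Ev_zero_imp) simp
  moreover have "lsub g h \<noteq> 0" by (rule lsub_nz[OF g h_nz])
  ultimately have "Phi = 0" by simp
  hence "det2 (endo g1 g2 (g *v w)) (g *v endo g1 g2 w) = 0" using ePhi[of w] by (simp add: Ev_def)
  moreover have "endo g1 g2 (g *v w) \<noteq> 0" by (rule Gm_nz[OF mv_nz[OF g w]])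
  moreover have "g *v endo g1 g2 w \<noteq> 0" by (rule mv_nz[OF g Gm_nz[OF w]])
  ultimately show ?thesis using proj_eq_iff by blast
qed

lemma fixed_imp:
  assumes "fixed_by G (endo f1 f2)" "g \<in> G" "invertible g"
  shows "endo f1 f2 (g *v w) = g *v endo f1 f2 w"
  using assms unfolding fixed_by_def by (metis inv_mv(2))

theorem equivariant:
  assumes "pgl_subgroup H" "fixed_by (sl_preimage H) (endo f1 f2)"
  shows "pgl_equivariant H (delta f1 f2)"
  unfolding pgl_equivariant_def
proof (intro ballI allI)
  fix X q assume X: "X \<in> H"
  hence "X \<in> PGL2" using assms(1) unfolding pgl_subgroup_def by blast
  then obtain g where g: "det g = 1" "pgl_class g = X" using PGL2_elem by blast
  have gi: "invertible g" using g det1_inv by blast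
  have gG: "g \<in> sl_preimage H" using g X by (simp add: sl_preimage_def)
  have fx: "endo f1 f2 (g *v w) = g *v endo f1 f2 w" for w by (rule fixed_imp[OF assms(2) gG gi])
  have act: "pgl_act X p = proj (g *v rep p)" for p by (metis act_class g(2))
  have lhs: "delta f1 f2 (pgl_act X q) = proj (endo g1 g2 (g *v rep q))"
    unfolding act by (rule delta_proj[OF mv_nz[OF gi rep_nz]])
  obtain s where s: "s \<noteq> 0" "rep (proj (endo g1 g2 (rep q))) = s *s endo g1 g2 (rep q)"
    using rep_proj Gm_nz[OF rep_nz] by blast
  have rhs: "pgl_act X (delta f1 f2 q) = proj (g *v endo g1 g2 (rep q))"
    unfolding act delta_eq s(2) by (simp add: vector_scalar_commute proj_scale s(1))
  show "delta f1 f2 (pgl_act X q) = pgl_act X (delta f1 f2 q)"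
    unfolding lhs rhs by (rule equiv_vec[OF gi fx rep_nz])
qed

lemma zl_iff: "q \<in> zero_locus f1 f2 \<longleftrightarrow> Ev f1 (rep q) * rep q $ 2 - Ev f2 (rep q) * rep q $ 1 = 0"
proof
  assume "q \<in> zero_locus f1 f2"
  then obtain v where v: "q = proj v" "v \<noteq> 0" "Ev f1 v * v$2 - Ev f2 v * v$1 = 0"
    unfolding zero_locus_def Ev_def by blast
  then obtain s where s: "s \<noteq> 0" "rep q = s *s v" using rep_proj by blast
  show "Ev f1 (rep q) * rep q $ 2 - Ev f2 (rep q) * rep q $ 1 = 0"
    unfolding s(2) Ev_scale[OF h1] Ev_scale[OF h2] using v(3)
    by (simp add: algebra_simps)
next
  assume "Ev f1 (rep q) * rep q $ 2 - Ev f2 (rep q) * rep q $ 1 = 0"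
  thus "q \<in> zero_locus f1 f2" unfolding zero_locus_def Ev_def
    by (intro CollectI exI[of _ "rep q"]) (simp add: rep_nz)
qed

lemma fix_in_zl: "delta f1 f2 q = q \<Longrightarrow> q \<in> zero_locus f1 f2"
proof -
  assume "delta f1 f2 q = q"
  hence "proj (endo g1 g2 (rep q)) = proj (rep q)" by (simp add: delta_eq)
  hence "det2 (endo g1 g2 (rep q)) (rep q) = 0" using proj_eq_iff Gm_nz rep_nz by blast
  hence "Ev g1 (rep q) * rep q $ 2 - Ev g2 (rep q) * rep q $ 1 = 0" by (simp add: det2_def)
  hence "Ev f1 (rep q) * rep q $ 2 - Ev f2 (rep q) * rep q $ 1 = 0"
    by (simp add: Ev_def ev_f1 ev_f2 algebra_simps)
  thus ?thesis using zl_iff by blast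
qed

lemma fix_nonempty: "\<exists>q. delta f1 f2 q = q"
proof -
  obtain k where k: "homog k g1" "homog k g2" using g_homog by blast
  define Q where "Q = g1 * [:0, 1:] - g2 * [:[:0, 1:]:]"
  have "homog (k + 1) Q" unfolding Q_def
    by (intro homog_diff homog_mult k) (auto simp: homog_def coeff_pCons split: nat.splits)
  then obtain q where "Ev Q (rep q) = 0" using homog_has_zero by fastforce
  hence "det2 (endo g1 g2 (rep q)) (rep q) = 0"
    by (auto simp: Q_def det2_def Ev_def ev2_alt algebra_simps)
  hence "proj (endo g1 g2 (rep q)) = proj (rep q)" using proj_eq_iff Gm_nz rep_nz by blast
  thus ?thesis by (intro exI[of _ q]) (simp add: delta_eq)
qed

end


lemma mv_sum: "(A::mat2) *v (\<Sum>x\<in>S. f x) = (\<Sum>x\<in>S. A *v f x)"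
  by (induction S rule: infinite_finite_induct) (simp_all add: matrix_vector_right_distrib)

lemma smult_sum: "(c::complex) *s (\<Sum>x\<in>S. (f x :: vec2)) = (\<Sum>x\<in>S. c *s f x)"
  by (simp add: vec2_eq_iff sum_distrib_left)

lemma act_inv:
  assumes "X \<in> PGL2"
  shows "pgl_act (pgl_inv X) (pgl_act X q) = q"
proof -
  obtain M where M: "invertible M" "X = pgl_class M" using assms unfolding PGL2_def by blast
  obtain c where c: "c \<noteq> 0" "rp X = smat c M" using rp_class M(2) by blast
  have Ai: "invertible (rp X)" using c M(1) by (simp add: invertible_det_nz det_smat)
  have act: "pgl_act X p = proj (rp X *v rep p)" for p by (simp add: pgl_act_def rp_def)
  have inv: "pgl_inv X = pgl_class (matrix_inv (rp X))" by (simp add: pgl_inv_def rp_def)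
  obtain s where s: "s \<noteq> 0" "rep (proj (rp X *v rep q)) = s *s (rp X *v rep q)"
    using rep_proj mv_nz[OF Ai rep_nz] by blast
  show ?thesis unfolding inv act_class act s(2)
    by (simp add: vector_scalar_commute inv_mv[OF Ai] proj_scale s(1))
qed

lemma infinite_P1: "infinite (UNIV :: complex option set)"
  by (simp add: infinite_UNIV_char_0)

locale setting =
  fixes H :: "(complex^2^2) set set" and \<Lambda> :: "complex option set"
  assumes sub: "pgl_subgroup H" and finH: "finite H"
    and finL: "finite \<Lambda>" and neL: "\<Lambda> \<noteq> {}"
    and invL: "\<forall>X\<in>H. \<forall>q\<in>\<Lambda>. pgl_act X q \<in> \<Lambda>"
begin

abbreviation "G \<equiv> sl_preimage H"

lemma G_inv: "g \<in> G \<Longrightarrow> invertible g"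
  by (simp add: sl_preimage_def det1_inv)

lemma G_act: "g \<in> G \<Longrightarrow> q \<in> \<Lambda> \<Longrightarrow> proj (g *v rep q) \<in> \<Lambda>"
proof -
  assume a: "g \<in> G" "q \<in> \<Lambda>"
  hence "pgl_class g \<in> H" by (simp add: sl_preimage_def)
  hence "pgl_act (pgl_class g) q \<in> \<Lambda>" using invL a(2) by blast
  thus ?thesis by (simp add: act_class)
qed

lemma G_mult: "g1 \<in> G \<Longrightarrow> g2 \<in> G \<Longrightarrow> g1 ** g2 \<in> G"
proof -
  assume a: "g1 \<in> G" "g2 \<in> G"
  obtain c1 where c1: "c1 \<noteq> 0" "rp (pgl_class g1) = smat c1 g1" using rp_class by blast
  obtain c2 where c2: "c2 \<noteq> 0" "rp (pgl_class g2) = smat c2 g2" using rp_class by blast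
  have "pgl_mul (pgl_class g1) (pgl_class g2) = pgl_class (g1 ** g2)"
    unfolding pgl_mul_def rp_def[symmetric] c1 c2 smat_mm using c1 c2 by (simp add: pgl_class_smat)
  moreover have "pgl_mul (pgl_class g1) (pgl_class g2) \<in> H"
    using a sub unfolding pgl_subgroup_def sl_preimage_def by blast
  ultimately show ?thesis using a by (simp add: sl_preimage_def det_mul)
qed

lemma G_finite: "finite G"
proof -
  have "G \<subseteq> (\<Union>X\<in>H. {A\<in>X. det A = 1})" by (auto simp: sl_preimage_def in_pgl_class)
  moreover have "finite {A\<in>X. det A = 1}" if "X \<in> H" for X
  proof -
    have "X \<in> PGL2" using that sub unfolding pgl_subgroup_def by blast
    then obtain M where M: "invertible M" "X = pgl_class M" unfolding PGL2_def by blast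
    have dM: "det M \<noteq> 0" using M by (simp add: invertible_det_nz)
    define r where "r = csqrt (1 / det M)"
    have r2: "r ^ 2 = 1 / det M" by (simp add: r_def)
    have "{A\<in>X. det A = 1} \<subseteq> (\<lambda>c. smat c M) ` {r, -r}"
    proof
      fix A assume "A \<in> {A\<in>X. det A = 1}"
      then obtain c where c: "c \<noteq> 0" "A = smat c M" "det A = 1" using M pgl_class_mem by blast
      hence "det M * c ^ 2 = det M * r ^ 2" using dM r2 by (simp add: det_smat field_simps)
      hence "c ^ 2 = r ^ 2" using dM by simp
      hence "c = r \<or> c = - r" by (simp add: power2_eq_iff)
      thus "A \<in> (\<lambda>c. smat c M) ` {r, -r}" using c by auto
    qed
    thus ?thesis using finite_subset by blast
  qed
  ultimately show ?thesis using finH by (meson finite_UN_I finite_subset)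
qed

definition lf :: "complex option \<Rightarrow> bipoly" where
  "lf \<mu> = lin (rep \<mu> $ 2) (- rep \<mu> $ 1)"

lemma Ev_lf[simp]: "Ev (lf \<mu>) v = det2 v (rep \<mu>)"
  by (simp add: lf_def Ev_def det2_def algebra_simps)

definition "Pp = (\<Prod>\<mu>\<in>\<Lambda>. lf \<mu>)"

definition Fp :: "vec2 \<Rightarrow> vec2" where
  "Fp w = (\<Sum>la\<in>\<Lambda>. (\<Prod>\<mu>\<in>\<Lambda> - {la}. det2 w (rep \<mu>)) *s rep la)"

definition fp :: "2 \<Rightarrow> bipoly" where
  "fp i = (\<Sum>la\<in>\<Lambda>. (\<Prod>\<mu>\<in>\<Lambda> - {la}. lf \<mu>) * [:[:rep la $ i:]:])"

lemma Ev_Pp: "Ev Pp w = (\<Prod>\<mu>\<in>\<Lambda>. det2 w (rep \<mu>))"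
  by (simp add: Pp_def)

lemma Ev_fp: "Ev (fp i) w = Fp w $ i"
  by (simp add: fp_def Fp_def mult.commute)

lemma det2_zero_iff: "w \<noteq> 0 \<Longrightarrow> det2 w (rep \<mu>) = 0 \<longleftrightarrow> proj w = \<mu>"
  using proj_eq_iff[of w "rep \<mu>"] rep_nz by simp

lemma Pp_zero_iff: "w \<noteq> 0 \<Longrightarrow> Ev Pp w = 0 \<longleftrightarrow> proj w \<in> \<Lambda>"
  by (simp add: Ev_Pp finL det2_zero_iff)

lemma homog_lf: "homog 1 (lf \<mu>)" unfolding lf_def by (rule homog_lin)

lemma homog_Pp: "homog (card \<Lambda>) Pp"
  using homog_prod[OF finL, of "\<lambda>_. 1" lf] homog_lf by (simp add: Pp_def)

lemma homog_fp: "homog (card \<Lambda> - 1) (fp i)"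
  unfolding fp_def
proof (rule homog_sum)
  fix la assume l: "la \<in> \<Lambda>"
  have "homog (\<Sum>\<mu>\<in>\<Lambda> - {la}. 1) (\<Prod>\<mu>\<in>\<Lambda> - {la}. lf \<mu>)"
    by (rule homog_prod) (use finL homog_lf in auto)
  hence "homog (card \<Lambda> - 1) (\<Prod>\<mu>\<in>\<Lambda> - {la}. lf \<mu>)" using l finL by simp
  from homog_mult[OF this homog_const]
  show "homog (card \<Lambda> - 1) ((\<Prod>\<mu>\<in>\<Lambda> - {la}. lf \<mu>) * [:[:rep la $ i:]:])" by simp
qed

lemma Fp_at:
  assumes "la \<in> \<Lambda>"
  shows "Fp (rep la) = (\<Prod>\<mu>\<in>\<Lambda> - {la}. det2 (rep la) (rep \<mu>)) *s rep la"
proof -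
  have z: "(\<Prod>\<mu>\<in>\<Lambda> - {la'}. det2 (rep la) (rep \<mu>)) = 0" if "la' \<in> \<Lambda>" "la' \<noteq> la" for la'
    using that assms finL by (subst prod_zero_iff) (auto simp: det2_self intro!: bexI[of _ la])
  have "Fp (rep la) = (\<Sum>la'\<in>\<Lambda>. if la' = la then (\<Prod>\<mu>\<in>\<Lambda> - {la}. det2 (rep la) (rep \<mu>)) *s rep la else 0)"
    unfolding Fp_def by (intro sum.cong refl) (auto simp: z)
  also have "\<dots> = (\<Prod>\<mu>\<in>\<Lambda> - {la}. det2 (rep la) (rep \<mu>)) *s rep la"
    using assms finL by (simp add: sum.delta')
  finally show ?thesis .
qed

lemma coef_nz: "la \<in> \<Lambda> \<Longrightarrow> (\<Prod>\<mu>\<in>\<Lambda> - {la}. det2 (rep la) (rep \<mu>)) \<noteq> 0"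
  using finL det2_zero_iff[OF rep_nz] by auto

lemma Fp_at_nz: "la \<in> \<Lambda> \<Longrightarrow> Fp (rep la) \<noteq> 0"
  using Fp_at coef_nz smult_nz rep_nz by metis

lemma det_Fp: "det2 w (Fp w) = of_nat (card \<Lambda>) * Ev Pp w"
proof -
  have "det2 w (Fp w) = (\<Sum>la\<in>\<Lambda>. (\<Prod>\<mu>\<in>\<Lambda> - {la}. det2 w (rep \<mu>)) * det2 w (rep la))"
    unfolding Fp_def det2_def by (simp add: sum_distrib_left sum_subtractf algebra_simps)
  also have "\<dots> = (\<Sum>la\<in>\<Lambda>. Ev Pp w)"
    unfolding Ev_Pp by (intro sum.cong refl) (simp add: finL prod.remove mult.commute)
  finally show ?thesis by simp
qed

lemma equiv_D:
  assumes g: "g \<in> G"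
  shows "\<exists>D. (\<forall>w. Ev Pp (g *v w) = D * Ev Pp w) \<and> (\<forall>w. Fp (g *v w) = D *s (g *v Fp w))"
proof -
  have gi: "invertible g" using G_inv g by blast
  have dg: "det g = 1" using g by (simp add: sl_preimage_def)
  define \<sigma> where "\<sigma> la = proj (g *v rep la)" for la
  have sig_in: "\<sigma> ` \<Lambda> \<subseteq> \<Lambda>" using G_act[OF g] by (auto simp: \<sigma>_def)
  have sig_inj: "inj_on \<sigma> \<Lambda>"
  proof (rule inj_onI)
    fix a b assume "a \<in> \<Lambda>" "b \<in> \<Lambda>" "\<sigma> a = \<sigma> b"
    hence "det2 (g *v rep a) (g *v rep b) = 0"
      unfolding \<sigma>_def using proj_eq_iff mv_nz[OF gi rep_nz] by blast
    hence "det2 (rep a) (rep b) = 0" by (simp add: det2_mult dg)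
    thus "a = b" using proj_eq_iff[OF rep_nz rep_nz] by simp
  qed
  have bij: "bij_betw \<sigma> \<Lambda> \<Lambda>"
    using endo_inj_surj[OF finL sig_in sig_inj] sig_inj by (simp add: bij_betw_def)
  have "\<exists>d. d \<noteq> 0 \<and> g *v rep la = d *s rep (\<sigma> la)" for la
    unfolding \<sigma>_def by (rule vec_rep[OF mv_nz[OF gi rep_nz]])
  then obtain d where d: "\<And>la. d la \<noteq> 0" "\<And>la. g *v rep la = d la *s rep (\<sigma> la)" by metis
  have rs: "rep (\<sigma> la) = (1 / d la) *s (g *v rep la)" for la
    using d[of la] by (simp add: vec2_eq_iff)
  have dt: "det2 (g *v w) (rep (\<sigma> \<mu>)) = (1 / d \<mu>) * det2 w (rep \<mu>)" for w \<mu>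
    unfolding rs det2_smult_right det2_mult dg by simp
  define D where "D = (\<Prod>\<mu>\<in>\<Lambda>. 1 / d \<mu>)"
  have P: "Ev Pp (g *v w) = D * Ev Pp w" for w
  proof -
    have "Ev Pp (g *v w) = (\<Prod>\<mu>\<in>\<Lambda>. det2 (g *v w) (rep (\<sigma> \<mu>)))"
      unfolding Ev_Pp using prod.reindex_bij_betw[OF bij, of "\<lambda>\<mu>. det2 (g *v w) (rep \<mu>)"] by simp
    also have "\<dots> = D * Ev Pp w" unfolding dt Ev_Pp D_def prod.distrib[symmetric] by simp
    finally show ?thesis .
  qed
  have F: "Fp (g *v w) = D *s (g *v Fp w)" for w
  proof -
    have inner: "(\<Prod>\<mu>\<in>\<Lambda> - {\<sigma> la}. det2 (g *v w) (rep \<mu>)) =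
        (\<Prod>\<mu>\<in>\<Lambda> - {la}. (1 / d \<mu>) * det2 w (rep \<mu>))" if l: "la \<in> \<Lambda>" for la
    proof -
      have "bij_betw \<sigma> (\<Lambda> - {la}) (\<Lambda> - {\<sigma> la})"
        by (rule bij_betw_DiffI[OF bij]) (use l sig_in in auto)
      from prod.reindex_bij_betw[OF this, of "\<lambda>\<mu>. det2 (g *v w) (rep \<mu>)"]
      show ?thesis by (simp add: dt)
    qed
    have "Fp (g *v w) = (\<Sum>la\<in>\<Lambda>. (\<Prod>\<mu>\<in>\<Lambda> - {\<sigma> la}. det2 (g *v w) (rep \<mu>)) *s rep (\<sigma> la))"
      unfolding Fp_def
      using sum.reindex_bij_betw[OF bij, of "%la. (\<Prod>\<mu>\<in>\<Lambda> - {la}. det2 (g *v w) (rep \<mu>)) *s rep la"]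
      by simp
    also have "\<dots> = (\<Sum>la\<in>\<Lambda>. D *s ((\<Prod>\<mu>\<in>\<Lambda> - {la}. det2 w (rep \<mu>)) *s (g *v rep la)))"
    proof (intro sum.cong refl)
      fix la assume l: "la \<in> \<Lambda>"
      have Dl: "D = (1 / d la) * (\<Prod>\<mu>\<in>\<Lambda> - {la}. 1 / d \<mu>)"
        unfolding D_def using l finL by (simp add: prod.remove)
      show "(\<Prod>\<mu>\<in>\<Lambda> - {\<sigma> la}. det2 (g *v w) (rep \<mu>)) *s rep (\<sigma> la) =
            D *s ((\<Prod>\<mu>\<in>\<Lambda> - {la}. det2 w (rep \<mu>)) *s (g *v rep la))"
      proof -
        have pd: "(\<Prod>\<mu>\<in>\<Lambda> - {la}. (1 / d \<mu>) * det2 w (rep \<mu>)) =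
           (\<Prod>\<mu>\<in>\<Lambda> - {la}. 1 / d \<mu>) * (\<Prod>\<mu>\<in>\<Lambda> - {la}. det2 w (rep \<mu>))"
          by (rule prod.distrib)
        show ?thesis unfolding inner[OF l] rs Dl pd by (simp add: vec2_eq_iff mult_ac)
      qed
    qed
    also have "\<dots> = D *s (g *v Fp w)"
      unfolding Fp_def mv_sum smult_sum by (simp add: vector_scalar_commute)
    finally show ?thesis .
  qed
  show ?thesis using P F by blast
qed

end


context setting
begin

lemma w0_ex: "\<exists>w0. Ev Pp w0 \<noteq> 0"
proof -
  obtain q where "q \<notin> \<Lambda>" using ex_new_if_finite[OF infinite_P1 finL] by blast
  thus ?thesis using Pp_zero_iff[OF rep_nz, of q] by auto
qed

definition "w0 = (SOME w. Ev Pp w \<noteq> 0)"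
lemma w0: "Ev Pp w0 \<noteq> 0" unfolding w0_def using w0_ex by (rule someI_ex)

definition "DD g = Ev Pp (g *v w0) / Ev Pp w0"

lemma DD_prop:
  assumes "g \<in> G"
  shows "Ev Pp (g *v w) = DD g * Ev Pp w" "Fp (g *v w) = DD g *s (g *v Fp w)"
proof -
  obtain D where D: "\<forall>w. Ev Pp (g *v w) = D * Ev Pp w" "\<forall>w. Fp (g *v w) = D *s (g *v Fp w)"
    using equiv_D[OF assms] by blast
  have "DD g = D" unfolding DD_def using D(1) w0 by simp
  thus "Ev Pp (g *v w) = DD g * Ev Pp w" "Fp (g *v w) = DD g *s (g *v Fp w)" using D by auto
qed

lemma DD_mult: "g1 \<in> G \<Longrightarrow> g2 \<in> G \<Longrightarrow> DD (g1 ** g2) = DD g1 * DD g2"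
proof -
  assume a: "g1 \<in> G" "g2 \<in> G"
  have "DD (g1 ** g2) * Ev Pp w0 = Ev Pp ((g1 ** g2) *v w0)" using DD_prop(1)[OF G_mult[OF a]] by simp
  also have "\<dots> = DD g1 * DD g2 * Ev Pp w0"
    by (simp add: matrix_vector_mul_assoc[symmetric] DD_prop(1)[OF a(1)] DD_prop(1)[OF a(2)])
  finally show ?thesis using w0 by simp
qed

lemma DD_nz: "g \<in> G \<Longrightarrow> DD g \<noteq> 0"
proof
  assume a: "g \<in> G" "DD g = 0"
  have "Ev Pp w0 = Ev Pp (g *v (matrix_inv g *v w0))" using inv_mv(1)[OF G_inv[OF a(1)]] by simp
  also have "\<dots> = 0" using DD_prop(1)[OF a(1)] a(2) by simp
  finally show False using w0 by simp
qed

lemma DD_root: "g \<in> G \<Longrightarrow> \<exists>e. e \<ge> 1 \<and> DD g ^ e = 1"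
proof -
  assume g: "g \<in> G"
  define z where "z = DD g"
  have S: "z ^ Suc k \<in> DD ` G" for k
  proof (induction k)
    case 0 thus ?case using g by (simp add: z_def)
  next
    case (Suc k)
    then obtain x where x: "x \<in> G" "z ^ Suc k = DD x" by auto
    have "z ^ Suc (Suc k) = DD (g ** x)" using DD_mult[OF g x(1)] x(2) by (simp add: z_def)
    thus ?case using G_mult[OF g x(1)] by blast
  qed
  have "\<not> inj (\<lambda>k. z ^ Suc k)"
  proof
    assume "inj (\<lambda>k. z ^ Suc k)"
    moreover have "range (\<lambda>k. z ^ Suc k) \<subseteq> DD ` G" using S by auto
    hence "finite (range (\<lambda>k. z ^ Suc k))" using G_finite finite_subset by blast
    ultimately show False using finite_imageD by fastforce
  qed
  then obtain a b where ab: "a \<noteq> b" "z ^ Suc a = z ^ Suc b" unfolding inj_def by blast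
  have zn: "z \<noteq> 0" using DD_nz[OF g] by (simp add: z_def)
  have "\<exists>e. e \<ge> 1 \<and> z ^ e = 1" if "a < b" "z ^ Suc a = z ^ Suc b" for a b
  proof -
    have "z ^ Suc b = z ^ Suc a * z ^ (b - a)" using that by (simp add: power_add[symmetric])
    hence "z ^ (b - a) = 1" using that zn by simp
    thus ?thesis using that by (intro exI[of _ "b - a"]) simp
  qed
  thus ?thesis using ab unfolding z_def by (metis linorder_neqE_nat)
qed

definition "eord g = (SOME e. e \<ge> 1 \<and> DD g ^ e = 1)"
lemma eord: "g \<in> G \<Longrightarrow> eord g \<ge> 1 \<and> DD g ^ eord g = 1"
  unfolding eord_def using DD_root by (rule someI_ex)

definition "MM = (\<Prod>g\<in>G. eord g)"
lemma MM_pos: "MM \<ge> 1"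
  unfolding MM_def using eord by (metis (no_types, lifting) One_nat_def Suc_le_eq prod_pos)
lemma DD_MM: "g \<in> G \<Longrightarrow> DD g ^ MM = 1"
proof -
  assume g: "g \<in> G"
  have "MM = eord g * (\<Prod>x\<in>G - {g}. eord x)" unfolding MM_def using g G_finite by (simp add: prod.remove)
  thus ?thesis using eord[OF g] by (simp add: power_mult)
qed

definition "mm = MM - 1"
definition "F1 = Pp ^ mm * fp 1"
definition "F2 = Pp ^ mm * fp 2"
definition "dF = mm * card \<Lambda> + (card \<Lambda> - 1)"

lemma endo_F: "endo F1 F2 w = Ev Pp w ^ mm *s Fp w"
  by (simp add: vec2_eq_iff F1_def F2_def Ev_fp)

lemma F_fixed_pt: "g \<in> G \<Longrightarrow> endo F1 F2 (g *v w) = g *v endo F1 F2 w"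
proof -
  assume g: "g \<in> G"
  have "DD g ^ mm * DD g = 1" using DD_MM[OF g] MM_pos unfolding mm_def
    by (metis Suc_diff_le diff_Suc_1 power_Suc2)
  thus ?thesis unfolding endo_F DD_prop[OF g]
    by (simp add: vector_scalar_commute power_mult_distrib vec2_eq_iff mult_ac)
qed

lemma F_fixed: "fixed_by G (endo F1 F2)"
  unfolding fixed_by_def
proof (intro ballI allI)
  fix g v assume g: "g \<in> G"
  show "g *v endo F1 F2 (matrix_inv g *v v) = endo F1 F2 v"
    using F_fixed_pt[OF g, of "matrix_inv g *v v"] inv_mv(1)[OF G_inv[OF g]] by simp
qed

lemma F_homog: "homog dF F1" "homog dF F2"
  unfolding F1_def F2_def dF_def by (intro homog_mult homog_power homog_Pp homog_fp)+

lemma card_pos: "card \<Lambda> > 0" using finL neL by (simp add: card_gt_0_iff)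

lemma F_zl: "zero_locus F1 F2 = \<Lambda>"
proof -
  have e: "ev2 F1 (v$1) (v$2) * v$2 - ev2 F2 (v$1) (v$2) * v$1 = - of_nat (card \<Lambda>) * Ev Pp v ^ Suc mm" for v
  proof -
    have "ev2 F1 (v$1) (v$2) * v$2 - ev2 F2 (v$1) (v$2) * v$1 = - (Ev Pp v ^ mm * det2 v (Fp v))"
      by (simp add: F1_def F2_def Ev_def[symmetric] Ev_fp det2_def algebra_simps)
    thus ?thesis by (simp add: det_Fp)
  qed
  show ?thesis
  proof
    show "zero_locus F1 F2 \<subseteq> \<Lambda>"
    proof
      fix q assume "q \<in> zero_locus F1 F2"
      then obtain v where v: "q = proj v" "v \<noteq> 0" "ev2 F1 (v$1) (v$2) * v$2 - ev2 F2 (v$1) (v$2) * v$1 = 0"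
        unfolding zero_locus_def by blast
      hence "Ev Pp v ^ Suc mm = 0" using e[of v] card_pos by simp
      hence "Ev Pp v = 0" by auto
      thus "q \<in> \<Lambda>" using Pp_zero_iff[OF v(2)] v(1) by simp
    qed
  next
    show "\<Lambda> \<subseteq> zero_locus F1 F2"
    proof
      fix q assume q: "q \<in> \<Lambda>"
      have "Ev Pp (rep q) = 0" using Pp_zero_iff[OF rep_nz] q by simp
      hence "ev2 F1 (rep q$1) (rep q$2) * rep q$2 - ev2 F2 (rep q$1) (rep q$2) * rep q$1 = 0"
        using e[of "rep q"] by simp
      thus "q \<in> zero_locus F1 F2" unfolding zero_locus_def using rep_nz by (metis (mono_tags, lifting) mem_Collect_eq proj_rep)
    qed
  qed
qed

lemma Pp_nz: "Pp \<noteq> 0" using w0 by (auto simp: Ev_def)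

lemma fp_nz: "fp 1 \<noteq> 0 \<or> fp 2 \<noteq> 0"
proof -
  obtain la where "la \<in> \<Lambda>" using neL by blast
  hence "Fp (rep la) \<noteq> 0" by (rule Fp_at_nz)
  thus ?thesis unfolding vec2_nz by (metis Ev_fp Ev_def ev2_0)
qed

lemma F_nz: "F1 \<noteq> 0 \<or> F2 \<noteq> 0"
  using fp_nz Pp_nz by (auto simp: F1_def F2_def)

lemma F_adm: "admissible H \<Lambda> F1 F2"
  unfolding admissible_def using F_homog F_fixed F_zl by blast

end

sublocale setting \<subseteq> A: pair F1 F2 dF
  by unfold_locales (use F_homog F_nz in auto)

sublocale setting \<subseteq> B: pair "fp 1" "fp 2" "card \<Lambda> - 1"
  by unfold_locales (use homog_fp fp_nz in auto)

context setting
begin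

lemma delta_same: "delta F1 F2 q = delta (fp 1) (fp 2) q"
proof -
  define c where "c = Pp ^ mm"
  define P where "P = c * B.h"
  have cnz: "c \<noteq> 0" using Pp_nz by (simp add: c_def)
  have Pnz: "P \<noteq> 0" using cnz B.h_nz by (simp add: P_def)
  define u where "u = unit_factor P"
  have uP: "u * normalize P = P" by (simp add: u_def)
  have Ah: "A.h = normalize P"
  proof -
    have "A.h = gcd F1 F2" by (simp add: A.h_def)
    also have "\<dots> = normalize P" by (simp add: F1_def F2_def P_def c_def B.h_def gcd_mult_left)
    finally show ?thesis .
  qed
  have nPnz: "normalize P \<noteq> 0" using Pnz by simp
  have g1: "A.g1 = u * B.g1"
  proof -
    have "F1 = c * (B.h * B.g1)" unfolding F1_def c_def by (subst B.f1_eq[symmetric]) (rule refl)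
    also have "\<dots> = (u * normalize P) * B.g1" unfolding uP by (simp add: P_def mult.assoc)
    also have "\<dots> = normalize P * (u * B.g1)" by (simp add: mult_ac)
    finally have "F1 = normalize P * (u * B.g1)" .
    thus ?thesis unfolding A.g1_def Ah using nPnz by simp
  qed
  have g2: "A.g2 = u * B.g2"
  proof -
    have "F2 = c * (B.h * B.g2)" unfolding F2_def c_def by (subst B.f2_eq[symmetric]) (rule refl)
    also have "\<dots> = (u * normalize P) * B.g2" unfolding uP by (simp add: P_def mult.assoc)
    also have "\<dots> = normalize P * (u * B.g2)" by (simp add: mult_ac)
    finally have "F2 = normalize P * (u * B.g2)" .
    thus ?thesis unfolding A.g2_def Ah using nPnz by simp
  qed
  have uu: "is_unit u" using Pnz by (simp add: u_def)
  then obtain v where "1 = u * v" by (metis dvdE)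
  hence "Ev u w * Ev v w = 1" for w by (metis Ev_mult Ev_def ev2_1)
  hence un: "Ev u w \<noteq> 0" for w by (metis mult_zero_left zero_neq_one)
  have "endo A.g1 A.g2 w = Ev u w *s endo B.g1 B.g2 w" for w
    by (simp add: vec2_eq_iff g1 g2)
  thus ?thesis unfolding A.delta_eq B.delta_eq by (simp add: proj_scale un)
qed

lemma B_fix: "la \<in> \<Lambda> \<Longrightarrow> delta (fp 1) (fp 2) la = la"
proof -
  assume l: "la \<in> \<Lambda>"
  define w where "w = rep la"
  have "Fp w = Ev B.h w *s endo B.g1 B.g2 w"
    using B.ev_f1[of "w$1" "w$2"] B.ev_f2[of "w$1" "w$2"]
    by (simp add: vec2_eq_iff Ev_fp[symmetric] Ev_def)
  moreover have Fw: "Fp w = (\<Prod>\<mu>\<in>\<Lambda> - {la}. det2 (rep la) (rep \<mu>)) *s rep la"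
    unfolding w_def by (rule Fp_at[OF l])
  ultimately have eq: "Ev B.h w *s endo B.g1 B.g2 w = (\<Prod>\<mu>\<in>\<Lambda> - {la}. det2 (rep la) (rep \<mu>)) *s rep la"
    by simp
  have hn: "Ev B.h w \<noteq> 0"
  proof
    assume "Ev B.h w = 0"
    hence "Fp w = 0" using \<open>Fp w = Ev B.h w *s endo B.g1 B.g2 w\<close> by (simp add: vec2_eq_iff)
    thus False using Fp_at_nz[OF l] by (simp add: w_def)
  qed
  have "endo B.g1 B.g2 w = ((\<Prod>\<mu>\<in>\<Lambda> - {la}. det2 (rep la) (rep \<mu>)) / Ev B.h w) *s rep la"
    using eq hn by (simp add: vec2_eq_iff field_simps)
  thus ?thesis using coef_nz[OF l] hn by (simp add: B.delta_eq w_def proj_scale)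
qed

lemma F_fix: "\<Lambda> = {q. delta F1 F2 q = q}"
proof
  show "\<Lambda> \<subseteq> {q. delta F1 F2 q = q}" using B_fix delta_same by auto
next
  show "{q. delta F1 F2 q = q} \<subseteq> \<Lambda>" using A.fix_in_zl F_zl by auto
qed

end


lemma zl_00: "zero_locus 0 0 = UNIV"
  unfolding zero_locus_def using rep_nz
  by (auto intro!: exI[where x="rep _"])

lemma adm_pair: "admissible H \<Lambda> f1 f2 \<Longrightarrow> finite \<Lambda> \<Longrightarrow> \<exists>d. pair f1 f2 d"
proof -
  assume a: "admissible H \<Lambda> f1 f2" "finite \<Lambda>"
  then obtain d where d: "homog d f1" "homog d f2" unfolding admissible_def by blast
  have "f1 \<noteq> 0 \<or> f2 \<noteq> 0"
  proof (rule ccontr)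
    assume "\<not> (f1 \<noteq> 0 \<or> f2 \<noteq> 0)"
    hence "\<Lambda> = UNIV" using a(1) zl_00 unfolding admissible_def by simp
    thus False using a(2) infinite_P1 by simp
  qed
  thus ?thesis using d by (intro exI[of _ d]) (unfold_locales)
qed

theorem mainTheorem11:
  fixes H :: "(complex^2^2) set set" and \<Lambda> :: "complex option set"
  assumes "pgl_subgroup H" and "finite H"
    and "finite \<Lambda>" and "\<Lambda> \<noteq> {}"
    and "\<forall>X\<in>H. \<forall>q\<in>\<Lambda>. pgl_act X q \<in> \<Lambda>"
  shows "(\<exists>f1 f2. admissible H \<Lambda> f1 f2)
    \<and> (\<forall>f1 f2. admissible H \<Lambda> f1 f2 \<longrightarrow> pgl_equivariant H (delta f1 f2))
    \<and> (\<exists>f1 f2. admissible H \<Lambda> f1 f2 \<and> \<Lambda> = {q. delta f1 f2 q = q})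
    \<and> ((\<exists>q0. \<Lambda> = (\<lambda>X. pgl_act X q0) ` H) \<longrightarrow>
         (\<forall>f1 f2. admissible H \<Lambda> f1 f2 \<longrightarrow> \<Lambda> = {q. delta f1 f2 q = q}))"
proof -
  interpret S: setting H \<Lambda> using assms by unfold_locales
  have P1: "\<exists>f1 f2. admissible H \<Lambda> f1 f2" using S.F_adm by blast
  have P2: "\<forall>f1 f2. admissible H \<Lambda> f1 f2 \<longrightarrow> pgl_equivariant H (delta f1 f2)"
  proof (intro allI impI)
    fix f1 f2 assume a: "admissible H \<Lambda> f1 f2"
    then obtain d where "pair f1 f2 d" using adm_pair assms(3) by blast
    thus "pgl_equivariant H (delta f1 f2)"
      using pair.equivariant a assms(1) unfolding admissible_def by blast
  qed
  have P3: "\<exists>f1 f2. admissible H \<Lambda> f1 f2 \<and> \<Lambda> = {q. delta f1 f2 q = q}"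
    using S.F_adm S.F_fix by blast
  have P4: "\<forall>f1 f2. admissible H \<Lambda> f1 f2 \<longrightarrow> \<Lambda> = {q. delta f1 f2 q = q}"
    if orb: "\<exists>q0. \<Lambda> = (\<lambda>X. pgl_act X q0) ` H"
  proof (intro allI impI)
    fix f1 f2 assume a: "admissible H \<Lambda> f1 f2"
    then obtain d where pr: "pair f1 f2 d" using adm_pair assms(3) by blast
    have zl: "\<Lambda> = zero_locus f1 f2" using a unfolding admissible_def by blast
    have eqv: "pgl_equivariant H (delta f1 f2)" using P2 a by blast
    obtain q0 where q0: "\<Lambda> = (\<lambda>X. pgl_act X q0) ` H" using orb by blast
    have inv: "delta f1 f2 (pgl_act Y p) = pgl_act Y p" if "Y \<in> H" "delta f1 f2 p = p" for Y p
      using eqv that unfolding pgl_equivariant_def by metis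
    show "\<Lambda> = {q. delta f1 f2 q = q}"
    proof
      show "{q. delta f1 f2 q = q} \<subseteq> \<Lambda>" using pair.fix_in_zl[OF pr] zl by auto
    next
      obtain q1 where q1: "delta f1 f2 q1 = q1" using pair.fix_nonempty[OF pr] by blast
      hence "q1 \<in> \<Lambda>" using pair.fix_in_zl[OF pr] zl by auto
      then obtain X1 where X1: "X1 \<in> H" "q1 = pgl_act X1 q0" using q0 by auto
      have "X1 \<in> PGL2" using X1(1) assms(1) unfolding pgl_subgroup_def by blast
      hence "q0 = pgl_act (pgl_inv X1) q1" using X1(2) act_inv by simp
      moreover have "pgl_inv X1 \<in> H" using X1(1) assms(1) unfolding pgl_subgroup_def by blast
      ultimately have "delta f1 f2 q0 = q0" using inv q1 by metis
      thus "\<Lambda> \<subseteq> {q. delta f1 f2 q = q}" using q0 inv by auto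
    qed
  qed
  show ?thesis using P1 P2 P3 P4 by blast
qed


end
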